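(* Let $\Lambda_1, \Lambda_2$ be integral lattices. Any isomorphism of $\rho$-invariants $\varphi: (C(\Lambda_1),\rho_1) \to (C(\Lambda_2),\rho_2)$ induces an isomorphism of discriminant forms $\varphi: (\overline{\Lambda}_1, b_1) \to (\overline{\Lambda}_2, b_2)$ (namely the group isomorphism underlying the torsor isomorphism preserves the discriminant forms).
   Context: A lattice is a finitely generated free abelian group $\Lambda$ with a non-degenerate symmetric $\mathbb{Q}$-valued bilinear form $\langle\,,\rangle$, integral if valued in $\mathbb{Z}$; $|x| = \langle x,x\rangle$; $\sigma(\Lambda)$ is the signature. $\Lambda^* = \{x\in\Lambda\otimes\mathbb{Q}: \langle x,y\rangle\in\mathbb{Z}\ \forall y\in\Lambda\}$, $\overline{\Lambda} = \Lambda^*/\Lambda$, with discriminant form $b(\bar x,\bar y) \equiv \langle x,y\rangle \pmod 1$, $b:\overline{\Lambda}\times\overline{\Lambda}\to\mathbb{Q}/\mathbb{Z}$. $\mathrm{Char}(\Lambda) = \{\chi\in\Lambda^*: \langle\chi,y\rangle\equiv|y| \pmod 2\ \forall y\in\Lambda\}$, $C(\Lambda) = \mathrm{Char}(\Lambda)/2\Lambda$, a torsor over $2\Lambda^*/2\Lambda\cong\overline{\Lambda}$ via $[\chi]+\bar x = [\chi+2x]$. $\rho: C(\Lambda)\to\mathbb{Q}/2\mathbb{Z}$, $\rho([\chi]) \equiv (|\chi| - \sigma(\Lambda))/4 \pmod 2$. An isomorphism $(C(\Lambda_1),\rho_1)\to(C(\Lambda_2),\rho_2)$ is a bijection $\varphi: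 C(\Lambda_1)\to C(\Lambda_2)$ and a group isomorphism $\varphi: \overline{\Lambda}_1\to\overline{\Lambda}_2$ with $\rho_2\circ\varphi = \rho_1$ and $\varphi(c)-\varphi(c') = \varphi(c-c')$. An isomorphism of discriminant forms is a group isomorphism $\varphi$ with $b_2(\varphi\bar x,\varphi\bar y) = b_1(\bar x,\bar y)$. *)

theory Defs
  imports Complex_Main
begin

text \<open>An integral lattice of rank CARD('n) is represented by its Gram matrix
  G :: 'n \<Rightarrow> 'n \<Rightarrow> int with respect to a basis.  Lambda = integer vectors in 'n \<Rightarrow> rat,
  Lambda \<otimes> Q = all of 'n \<Rightarrow> rat.\<close>

definition bil :: "('n::finite \<Rightarrow> 'n \<Rightarrow> int) \<Rightarrow> ('n \<Rightarrow> rat) \<Rightarrow> ('n \<Rightarrow> rat) \<Rightarrow> rat" where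
  "bil G x y = (\<Sum>i\<in>UNIV. \<Sum>j\<in>UNIV. x i * of_int (G i j) * y j)"

definition is_int_lattice :: "('n::finite \<Rightarrow> 'n \<Rightarrow> int) \<Rightarrow> bool" where
  "is_int_lattice G \<longleftrightarrow> (\<forall>i j. G i j = G j i) \<and>
     (\<forall>x. (\<forall>y. bil G x y = 0) \<longrightarrow> x = (\<lambda>i. 0))"

definition latt :: "('n::finite \<Rightarrow> rat) set" where
  "latt = {x. \<forall>i. x i \<in> \<int>}"

definition dual :: "('n::finite \<Rightarrow> 'n \<Rightarrow> int) \<Rightarrow> ('n \<Rightarrow> rat) set" where
  "dual G = {x. \<forall>y\<in>latt. bil G x y \<in> \<int>}"

definition chars :: "('n::finite \<Rightarrow> 'n \<Rightarrow> int) \<Rightarrow> ('n \<Rightarrow> rat) set" where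
  "chars G = {c \<in> dual G. \<forall>y\<in>latt. \<exists>k::int. bil G c y - bil G y y = 2 * of_int k}"

definition qreal :: "('n::finite \<Rightarrow> 'n \<Rightarrow> int) \<Rightarrow> ('n \<Rightarrow> real) \<Rightarrow> real" where
  "qreal G x = (\<Sum>i\<in>UNIV. \<Sum>j\<in>UNIV. x i * of_int (G i j) * x j)"

definition pos_index :: "('n::finite \<Rightarrow> 'n \<Rightarrow> int) \<Rightarrow> nat" where
  "pos_index G = Max {k. \<exists>v :: nat \<Rightarrow> 'n \<Rightarrow> real. \<forall>c :: nat \<Rightarrow> real.
      (\<exists>i<k. c i \<noteq> 0) \<longrightarrow> qreal G (\<lambda>t. \<Sum>i<k. c i * v i t) > 0}"

definition neg_index :: "('n::finite \<Rightarrow> 'n \<Rightarrow> int) \<Rightarrow> nat" where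
  "neg_index G = pos_index (\<lambda>i j. - G i j)"

definition signature :: "('n::finite \<Rightarrow> 'n \<Rightarrow> int) \<Rightarrow> int" where
  "signature G = int (pos_index G) - int (neg_index G)"

definition disc :: "('n::finite \<Rightarrow> 'n \<Rightarrow> int) \<Rightarrow> ('n \<Rightarrow> rat) set set" where
  "disc G = {{(\<lambda>i. x i + y i) | y. y \<in> latt} | x. x \<in> dual G}"

definition coset_add :: "('n \<Rightarrow> rat) set \<Rightarrow> ('n \<Rightarrow> rat) set \<Rightarrow> ('n \<Rightarrow> rat) set" where
  "coset_add X Y = {(\<lambda>i. x i + y i) | x y. x \<in> X \<and> y \<in> Y}"

text \<open>Discriminant form with values in Q/Z, represented as cosets of Z in Q.\<close>
definition disc_form :: "('n::finite \<Rightarrow> 'n \<Rightarrow> int) \<Rightarrow> ('n \<Rightarrow> rat) set \<Rightarrow> ('n \<Rightarrow> rat) set \<Rightarrow> rat set" where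
  "disc_form G X Y = {bil G x y + of_int k | x y k. x \<in> X \<and> y \<in> Y}"

text \<open>C(Lambda) = Char(Lambda)/2 Lambda, as the set of cosets chi + 2 Lambda.\<close>
definition charclasses :: "('n::finite \<Rightarrow> 'n \<Rightarrow> int) \<Rightarrow> ('n \<Rightarrow> rat) set set" where
  "charclasses G = {{(\<lambda>i. c i + 2 * y i) | y. y \<in> latt} | c. c \<in> chars G}"

text \<open>Torsor difference: [chi] - [chi'] = (chi - chi')/2 mod Lambda (the unique x with [chi'] + x = [chi]).\<close>
definition char_diff :: "('n \<Rightarrow> rat) set \<Rightarrow> ('n \<Rightarrow> rat) set \<Rightarrow> ('n \<Rightarrow> rat) set" where
  "char_diff C C' = {(\<lambda>i. (a i - b i) / 2) | a b. a \<in> C \<and> b \<in> C'}"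

text \<open>rho-invariant with values in Q/2Z, represented as cosets of 2Z in Q.\<close>
definition rho :: "('n::finite \<Rightarrow> 'n \<Rightarrow> int) \<Rightarrow> ('n \<Rightarrow> rat) set \<Rightarrow> rat set" where
  "rho G C = {(bil G c c - of_int (signature G)) / 4 + 2 * of_int k | c k. c \<in> C}"

definition rho_iso ::
  "('n::finite \<Rightarrow> 'n \<Rightarrow> int) \<Rightarrow> ('m::finite \<Rightarrow> 'm \<Rightarrow> int)
   \<Rightarrow> (('n \<Rightarrow> rat) set \<Rightarrow> ('m \<Rightarrow> rat) set) \<Rightarrow> (('n \<Rightarrow> rat) set \<Rightarrow> ('m \<Rightarrow> rat) set) \<Rightarrow> bool" where
  "rho_iso G1 G2 phiC phiD \<longleftrightarrow>
     bij_betw phiC (charclasses G1) (charclasses G2) \<and>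
     bij_betw phiD (disc G1) (disc G2) \<and>
     (\<forall>X\<in>disc G1. \<forall>Y\<in>disc G1. phiD (coset_add X Y) = coset_add (phiD X) (phiD Y)) \<and>
     (\<forall>C\<in>charclasses G1. rho G2 (phiC C) = rho G1 C) \<and>
     (\<forall>C\<in>charclasses G1. \<forall>C'\<in>charclasses G1.
        char_diff (phiC C) (phiC C') = phiD (char_diff C C'))"

definition disc_form_iso ::
  "('n::finite \<Rightarrow> 'n \<Rightarrow> int) \<Rightarrow> ('m::finite \<Rightarrow> 'm \<Rightarrow> int)
   \<Rightarrow> (('n \<Rightarrow> rat) set \<Rightarrow> ('m \<Rightarrow> rat) set) \<Rightarrow> bool" where
  "disc_form_iso G1 G2 phiD \<longleftrightarrow>
     bij_betw phiD (disc G1) (disc G2) \<and>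
     (\<forall>X\<in>disc G1. \<forall>Y\<in>disc G1. phiD (coset_add X Y) = coset_add (phiD X) (phiD Y)) \<and>
     (\<forall>X\<in>disc G1. \<forall>Y\<in>disc G1. disc_form G2 (phiD X) (phiD Y) = disc_form G1 X Y)"

end

theory Submission
  imports Defs "HOL-Analysis.Analysis"
begin

lemma bil_add_left: "bil G (\<lambda>i. x i + y i) z = bil G x z + bil G y z"
  unfolding bil_def by (simp add: distrib_right sum.distrib)
lemma bil_add_right: "bil G z (\<lambda>i. x i + y i) = bil G z x + bil G z y"
  unfolding bil_def by (simp add: distrib_left sum.distrib)
lemma bil_diff_left: "bil G (\<lambda>i. x i - y i) z = bil G x z - bil G y z"
  unfolding bil_def by (simp add: left_diff_distrib sum_subtractf)
lemma bil_scale_left: "bil G (\<lambda>i. a * x i) z = a * bil G x z"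
  unfolding bil_def by (simp add: sum_distrib_left mult.assoc)
lemma bil_scale_right: "bil G z (\<lambda>i. a * x i) = a * bil G z x"
  unfolding bil_def by (simp add: sum_distrib_left mult.assoc mult.left_commute)
lemma bil_half_left: "bil G (\<lambda>i. x i / 2) z = bil G x z / 2"
  unfolding bil_def by (simp add: sum_divide_distrib)
lemma bil_sym: assumes "\<forall>i j. G i j = G j i" shows "bil G x y = bil G y x"
  unfolding bil_def
  apply (subst sum.swap)
  using assms by (simp add: mult.commute mult.left_commute)

lemma latt_add: "x \<in> latt \<Longrightarrow> y \<in> latt \<Longrightarrow> (\<lambda>i. x i + y i) \<in> latt"
  by (auto simp: latt_def)
lemma latt_diff: "x \<in> latt \<Longrightarrow> y \<in> latt \<Longrightarrow> (\<lambda>i. x i - y i) \<in> latt"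
  by (auto simp: latt_def)
lemma latt_zero: "(\<lambda>i. 0) \<in> latt" by (auto simp: latt_def)

lemma bil_latt: "x \<in> latt \<Longrightarrow> y \<in> latt \<Longrightarrow> bil G x y \<in> \<int>"
  unfolding bil_def latt_def
  by (intro Ints_sum Ints_mult) auto

definition cs :: "('n::finite \<Rightarrow> rat) \<Rightarrow> ('n \<Rightarrow> rat) set" where
  "cs x = {(\<lambda>i. x i + y i) | y. y \<in> latt}"
definition ccl :: "('n::finite \<Rightarrow> rat) \<Rightarrow> ('n \<Rightarrow> rat) set" where
  "ccl x = {(\<lambda>i. x i + 2 * y i) | y. y \<in> latt}"

lemma mem_cs: "y \<in> latt \<Longrightarrow> (\<lambda>i. x i + y i) \<in> cs x" unfolding cs_def by blast
lemma mem_ccl: "y \<in> latt \<Longrightarrow> (\<lambda>i. x i + 2 * y i) \<in> ccl x" unfolding ccl_def by blast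

lemma mem_char_diff: "a \<in> A \<Longrightarrow> b \<in> B \<Longrightarrow> (\<lambda>i. (a i - b i) / 2) \<in> char_diff A B"
  unfolding char_diff_def by blast

lemma disc_cs: "disc G = cs ` dual G" unfolding disc_def cs_def by auto
lemma charclasses_ccl: "charclasses G = ccl ` chars G" unfolding charclasses_def ccl_def by auto

lemma cs_eqD: assumes "cs a = cs b" shows "(\<lambda>i. a i - b i) \<in> latt"
proof -
  have "(\<lambda>i. a i + 0) \<in> cs a" using mem_cs[OF latt_zero] .
  then have "a \<in> cs b" using assms by simp
  then obtain y where "y \<in> latt" "a = (\<lambda>i. b i + y i)" unfolding cs_def by blast
  then show ?thesis by simp
qed

lemma ccl_shift: assumes "u \<in> latt" shows "ccl (\<lambda>i. v i + 2 * u i) = ccl v"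
proof
  show "ccl (\<lambda>i. v i + 2 * u i) \<subseteq> ccl v"
  proof
    fix z assume "z \<in> ccl (\<lambda>i. v i + 2 * u i)"
    then obtain y where y: "y \<in> latt" "z = (\<lambda>i. v i + 2 * u i + 2 * y i)" unfolding ccl_def by blast
    then have zz: "z = (\<lambda>i. v i + 2 * (u i + y i))" by (simp add: algebra_simps)
    show "z \<in> ccl v" unfolding zz by (rule mem_ccl[OF latt_add[OF assms y(1)]])
  qed
  show "ccl v \<subseteq> ccl (\<lambda>i. v i + 2 * u i)"
  proof
    fix z assume "z \<in> ccl v"
    then obtain y where y: "y \<in> latt" "z = (\<lambda>i. v i + 2 * y i)" unfolding ccl_def by blast
    then have zz: "z = (\<lambda>i. v i + 2 * u i + 2 * (y i - u i))" by (simp add: algebra_simps)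
    show "z \<in> ccl (\<lambda>i. v i + 2 * u i)" unfolding zz by (rule mem_ccl[OF latt_diff[OF y(1) assms]])
  qed
qed

lemma char_diff_ccl: "char_diff (ccl a) (ccl b) = cs (\<lambda>i. (a i - b i) / 2)"
proof
  show "char_diff (ccl a) (ccl b) \<subseteq> cs (\<lambda>i. (a i - b i) / 2)"
  proof
    fix z assume "z \<in> char_diff (ccl a) (ccl b)"
    then obtain p q where pq: "p \<in> ccl a" "q \<in> ccl b" "z = (\<lambda>i. (p i - q i) / 2)"
      unfolding char_diff_def by blast
    obtain y where y1: "y \<in> latt" "p = (\<lambda>i. a i + 2 * y i)" using pq(1) unfolding ccl_def by blast
    obtain y' where y2: "y' \<in> latt" "q = (\<lambda>i. b i + 2 * y' i)" using pq(2) unfolding ccl_def by blast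
    have y: "y \<in> latt" "y' \<in> latt" using y1 y2 by auto
    have zz: "z = (\<lambda>i. (a i - b i) / 2 + (y i - y' i))" unfolding pq(3) y1(2) y2(2) by (simp add: field_simps)
    show "z \<in> cs (\<lambda>i. (a i - b i) / 2)" unfolding zz by (rule mem_cs[OF latt_diff[OF y(1,2)]])
  qed
  show "cs (\<lambda>i. (a i - b i) / 2) \<subseteq> char_diff (ccl a) (ccl b)"
  proof
    fix z assume "z \<in> cs (\<lambda>i. (a i - b i) / 2)"
    then obtain y where y: "y \<in> latt" "z = (\<lambda>i. (a i - b i) / 2 + y i)" unfolding cs_def by blast
    have h1: "(\<lambda>i. a i + 2 * y i) \<in> ccl a" by (rule mem_ccl[OF y(1)])
    have h2: "(\<lambda>i. b i + 2 * 0) \<in> ccl b" by (rule mem_ccl[OF latt_zero])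
    have zz: "z = (\<lambda>i. ((a i + 2 * y i) - (b i + 2 * 0)) / 2)" using y(2) by (simp add: field_simps)
    show "z \<in> char_diff (ccl a) (ccl b)" unfolding zz by (rule mem_char_diff[OF h1 h2])
  qed
qed

lemma chars_shift:
  fixes G :: "'n::finite \<Rightarrow> 'n \<Rightarrow> int"
  assumes sym: "\<forall>i j. G i j = G j i" and c: "c \<in> chars G" and x: "x \<in> dual G"
  shows "(\<lambda>i. c i + 2 * x i) \<in> chars G"
proof -
  have cd: "c \<in> dual G" using c by (simp add: chars_def)
  have "(\<lambda>i. c i + 2 * x i) \<in> dual G"
    using cd x by (auto simp: dual_def bil_add_left bil_scale_left)
  moreover have "\<exists>k::int. bil G (\<lambda>i. c i + 2 * x i) y - bil G y y = 2 * of_int k" if y: "y \<in> latt" for y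
  proof -
    obtain k::int where k: "bil G c y - bil G y y = 2 * of_int k" using c y by (auto simp: chars_def)
    obtain m where m: "bil G x y = of_int m" using x y by (auto simp: dual_def elim!: Ints_cases)
    have e: "bil G (\<lambda>i. c i + 2 * x i) y = bil G c y + 2 * bil G x y"
      by (simp only: bil_add_left bil_scale_left)
    show ?thesis unfolding e
      by (rule exI[of _ "k + m"]) (use k m in \<open>simp add: algebra_simps\<close>)
  qed
  ultimately show ?thesis by (simp add: chars_def)
qed

lemma half_diff_dual:
  fixes G :: "'n::finite \<Rightarrow> 'n \<Rightarrow> int"
  assumes sym: "\<forall>i j. G i j = G j i" and a: "a \<in> chars G" and b: "b \<in> chars G"
  shows "(\<lambda>i. (a i - b i) / 2) \<in> dual G"
  unfolding dual_def
proof (intro CollectI ballI)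
  fix y :: "'n \<Rightarrow> rat" assume y: "y \<in> latt"
  obtain k::int where k: "bil G a y - bil G y y = 2 * of_int k" using a y by (auto simp: chars_def)
  obtain m::int where m: "bil G b y - bil G y y = 2 * of_int m" using b y by (auto simp: chars_def)
  have e: "bil G (\<lambda>i. (a i - b i) / 2) y = (bil G a y - bil G b y) / 2"
    by (simp only: bil_half_left bil_diff_left)
  have "bil G (\<lambda>i. (a i - b i) / 2) y = of_int (k - m)"
    unfolding e using k m by (simp add: field_simps)
  then show "bil G (\<lambda>i. (a i - b i) / 2) y \<in> \<int>" by simp
qed

definition rr :: "('n::finite \<Rightarrow> 'n \<Rightarrow> int) \<Rightarrow> ('n \<Rightarrow> rat) \<Rightarrow> rat" where
  "rr G c = (bil G c c - of_int (signature G)) / 4"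

lemma rho_ccl:
  assumes sym: "\<forall>i j. G i j = G j i" and c: "c \<in> chars G"
  shows "rho G (ccl c) = {rr G c + 2 * of_int k | k. True}"
proof
  show "rho G (ccl c) \<subseteq> {rr G c + 2 * of_int k | k. True}"
  proof
    fix z assume "z \<in> rho G (ccl c)"
    then obtain y k where y: "y \<in> latt" and z: "z = (bil G (\<lambda>i. c i + 2 * y i) (\<lambda>i. c i + 2 * y i) - of_int (signature G)) / 4 + 2 * of_int k"
      unfolding rho_def ccl_def by blast
    obtain m::int where m: "bil G c y - bil G y y = 2 * of_int m" using c y by (auto simp: chars_def)
    obtain n::int where n: "bil G y y = of_int n" using bil_latt[OF y y] by (auto elim!: Ints_cases)
    have s: "bil G y c = bil G c y" using bil_sym[OF sym] .
    have e: "bil G (\<lambda>i. c i + 2 * y i) (\<lambda>i. c i + 2 * y i) = bil G c c + 4 * (bil G c y + bil G y y)"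
      by (simp only: bil_add_left bil_add_right bil_scale_left bil_scale_right s) (simp add: algebra_simps)
    have "z = rr G c + 2 * of_int (k + m + n)"
      unfolding z rr_def e using m n by (simp add: field_simps)
    then show "z \<in> {rr G c + 2 * of_int k | k. True}" by blast
  qed
  show "{rr G c + 2 * of_int k | k. True} \<subseteq> rho G (ccl c)"
  proof
    fix z assume "z \<in> {rr G c + 2 * of_int k | k. True}"
    then obtain k where z: "z = rr G c + 2 * of_int k" by blast
    have "(\<lambda>i. c i + 2 * 0) \<in> ccl c" by (rule mem_ccl[OF latt_zero])
    moreover have "(\<lambda>i. c i + 2 * (0::rat)) = c" by simp
    ultimately show "z \<in> rho G (ccl c)" unfolding rho_def z rr_def by force
  qed
qed

lemma disc_form_cs:
  assumes sym: "\<forall>i j. G i j = G j i" and x: "x \<in> dual G" and y: "y \<in> dual G"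
  shows "disc_form G (cs x) (cs y) = {bil G x y + of_int k | k. True}"
proof
  show "disc_form G (cs x) (cs y) \<subseteq> {bil G x y + of_int k | k. True}"
  proof
    fix z assume "z \<in> disc_form G (cs x) (cs y)"
    then obtain u v k where u: "u \<in> latt" and v: "v \<in> latt" and z: "z = bil G (\<lambda>i. x i + u i) (\<lambda>i. y i + v i) + of_int k"
      unfolding disc_form_def cs_def by blast
    obtain a where a: "bil G x v = of_int a" using x v by (auto simp: dual_def elim!: Ints_cases)
    obtain b where b: "bil G y u = of_int b" using y u by (auto simp: dual_def elim!: Ints_cases)
    obtain c where c: "bil G u v = of_int c" using bil_latt[OF u v] by (auto elim!: Ints_cases)
    have s: "bil G u y = bil G y u" using bil_sym[OF sym] .
    have "z = bil G x y + of_int (a + b + c + k)"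
      unfolding z by (simp add: bil_add_left bil_add_right s a b c)
    then show "z \<in> {bil G x y + of_int k | k. True}" by blast
  qed
  show "{bil G x y + of_int k | k. True} \<subseteq> disc_form G (cs x) (cs y)"
  proof
    fix z assume "z \<in> {bil G x y + of_int k | k. True}"
    then obtain k where z: "z = bil G x y + of_int k" by blast
    have "(\<lambda>i. x i + 0) \<in> cs x" "(\<lambda>i. y i + 0) \<in> cs y" by (rule mem_cs[OF latt_zero])+
    then show "z \<in> disc_form G (cs x) (cs y)" unfolding disc_form_def z by force
  qed
qed

lemma quad:
  assumes sym: "\<forall>i j. G i j = G j i"
  shows "rr G (\<lambda>i. c i + 2 * x i + 2 * y i) - rr G (\<lambda>i. c i + 2 * x i) - rr G (\<lambda>i. c i + 2 * y i) + rr G c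
     = 2 * bil G x y"
proof -
  have s1: "bil G x c = bil G c x" "bil G y c = bil G c y" "bil G y x = bil G x y"
    using bil_sym[OF sym] by auto
  show ?thesis unfolding rr_def
    by (simp only: bil_add_left bil_add_right bil_scale_left bil_scale_right s1) (simp add: field_simps)
qed

lemma set_shift_eq:
  assumes "{a + 2 * of_int k | k::int. True} = {b + 2 * of_int k | k::int. True}"
  shows "\<exists>k::int. (a::rat) = b + 2 * of_int k"
proof -
  have "a + 2 * of_int (0::int) \<in> {a + 2 * of_int k | k::int. True}" by blast
  then show ?thesis using assms by auto
qed

lemma even_sq_diff: "even ((n::int) * n - n)"
proof -
  have "n * n - n = n * (n - 1)" by (simp add: algebra_simps)
  then show ?thesis by auto
qed

lemma even3: "(x::int) = p + 2 * q + r \<Longrightarrow> even r \<Longrightarrow> even p \<Longrightarrow> even x"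
  by auto

lemma par:
  fixes G :: "'n \<Rightarrow> 'n \<Rightarrow> int" and z :: "'n \<Rightarrow> int"
  assumes sym: "\<forall>i j. G i j = G j i" and fin: "finite S"
  shows "even ((\<Sum>i\<in>S. \<Sum>j\<in>S. z i * G i j * z j) - (\<Sum>j\<in>S. G j j * z j))"
  using fin
proof (induction S rule: finite_induct)
  case empty show ?case by simp
next
  case (insert a S)
  have sw: "(\<Sum>i\<in>S. z i * G i a * z a) = (\<Sum>j\<in>S. z a * G a j * z j)"
    by (rule sum.cong) (use sym in \<open>auto simp: mult.commute mult.left_commute\<close>)
  have "(\<Sum>i\<in>insert a S. \<Sum>j\<in>insert a S. z i * G i j * z j)
     = z a * G a a * z a + (\<Sum>j\<in>S. z a * G a j * z j) + ((\<Sum>i\<in>S. z i * G i a * z a) + (\<Sum>i\<in>S. \<Sum>j\<in>S. z i * G i j * z j))"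
    using insert.hyps by (simp add: sum.distrib)
  also have "\<dots> = (\<Sum>i\<in>S. \<Sum>j\<in>S. z i * G i j * z j) + 2 * (\<Sum>j\<in>S. z a * G a j * z j) + G a a * (z a * z a)"
    unfolding sw by (simp add: algebra_simps)
  finally have e1: "(\<Sum>i\<in>insert a S. \<Sum>j\<in>insert a S. z i * G i j * z j) = \<dots>" .
  have e2: "(\<Sum>j\<in>insert a S. G j j * z j) = G a a * z a + (\<Sum>j\<in>S. G j j * z j)"
    using insert.hyps by simp
  have "(\<Sum>i\<in>insert a S. \<Sum>j\<in>insert a S. z i * G i j * z j) - (\<Sum>j\<in>insert a S. G j j * z j)
    = ((\<Sum>i\<in>S. \<Sum>j\<in>S. z i * G i j * z j) - (\<Sum>j\<in>S. G j j * z j)) + 2 * (\<Sum>j\<in>S. z a * G a j * z j)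
      + G a a * (z a * z a - z a)"
    unfolding e1 e2 by (simp add: algebra_simps)
  moreover have "even (G a a * (z a * z a - z a))" using even_sq_diff by simp
  ultimately show ?case using insert.IH by (rule even3)
qed

lemma chars_exist:
  fixes G :: "'n::finite \<Rightarrow> 'n \<Rightarrow> int"
  assumes "is_int_lattice G" shows "\<exists>c. c \<in> chars G"
proof -
  have sym: "\<forall>i j. G i j = G j i" and nd: "\<forall>x. (\<forall>y. bil G x y = 0) \<longrightarrow> x = (\<lambda>i. 0)"
    using assms by (auto simp: is_int_lattice_def)
  define M :: "rat^'n^'n" where "M = (\<chi> i j. rat_of_int (G i j))"
  have key: "bil G (\<lambda>i. v $ i) y = (\<Sum>j\<in>UNIV. (M *v v) $ j * y j)" for v y
  proof -
    have "bil G (\<lambda>i. v $ i) y = (\<Sum>j\<in>UNIV. \<Sum>i\<in>UNIV. v $ i * of_int (G i j) * y j)"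
      unfolding bil_def by (rule sum.swap)
    also have "\<dots> = (\<Sum>j\<in>UNIV. (\<Sum>i\<in>UNIV. M $ j $ i * v $ i) * y j)"
      unfolding M_def
      apply (rule sum.cong[OF refl])
      apply (simp add: sum_distrib_right)
      apply (rule sum.cong[OF refl])
      using sym by (simp add: ac_simps)
    finally show ?thesis by (simp add: matrix_vector_mult_def)
  qed
  have inj: "inj ((*v) M)"
  proof (rule injI)
    fix v w assume vw: "M *v v = M *v w"
    have h0: "M *v (v - w) = 0" using vw by (simp add: matrix_vector_mult_diff_distrib)
    have "\<forall>y. bil G (\<lambda>i. (v - w) $ i) y = 0"
    proof
      fix y show "bil G (\<lambda>i. (v - w) $ i) y = 0" unfolding key h0 by simp
    qed
    then have "(\<lambda>i. (v - w) $ i) = (\<lambda>i. 0)" using nd by blast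
    then show "v = w" by (metis vec_eq_iff diff_eq_eq add_0 vector_minus_component zero_index)
  qed
  have "surj ((*v) M)" by (rule vec.linear_inj_imp_surj[OF matrix_vector_mul_linear_gen inj])
  then obtain v where v: "M *v v = (\<chi> j. rat_of_int (G j j))" by (metis surjD)
  define c where "c = (\<lambda>i. v $ i)"
  have bc: "bil G c y = (\<Sum>j\<in>UNIV. of_int (G j j) * y j)" for y
    unfolding c_def key v by simp
  have cd: "c \<in> dual G"
    unfolding dual_def latt_def by (auto simp: bc intro!: Ints_sum Ints_mult)
  have "\<exists>k::int. bil G c y - bil G y y = 2 * of_int k" if y: "y \<in> latt" for y
  proof -
    obtain z where z: "y = (\<lambda>i. rat_of_int (z i))"
    proof
      show "y = (\<lambda>i. rat_of_int (THE k. y i = of_int k))"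
      proof
        fix i have "y i \<in> \<int>" using y by (simp add: latt_def)
        then obtain k where "y i = of_int k" by (auto elim: Ints_cases)
        then show "y i = rat_of_int (THE k. y i = of_int k)" by simp
      qed
    qed
    define D where "D = (\<Sum>j\<in>UNIV. G j j * z j) - (\<Sum>i\<in>UNIV. \<Sum>j\<in>UNIV. z i * G i j * z j)"
    have eq: "bil G c y - bil G y y = of_int D"
      unfolding D_def bc unfolding bil_def z by simp
    have pe: "even ((\<Sum>i\<in>UNIV. \<Sum>j\<in>UNIV. z i * G i j * z j) - (\<Sum>j\<in>UNIV. G j j * z j))"
      by (rule par[OF sym]) simp
    have "D = - ((\<Sum>i\<in>UNIV. \<Sum>j\<in>UNIV. z i * G i j * z j) - (\<Sum>j\<in>UNIV. G j j * z j))"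
      unfolding D_def by simp
    then have "even D" using pe by (simp only: even_minus)
    then obtain k where "D = 2 * k" by (rule evenE)
    then show ?thesis using eq by (intro exI[of _ k]) simp
  qed
  then show ?thesis using cd by (auto simp: chars_def)
qed

theorem lemma2p3:
  fixes G1 :: "'n::finite \<Rightarrow> 'n \<Rightarrow> int" and G2 :: "'m::finite \<Rightarrow> 'm \<Rightarrow> int"
    and phiC phiD :: "('n \<Rightarrow> rat) set \<Rightarrow> ('m \<Rightarrow> rat) set"
  assumes "is_int_lattice G1" and "is_int_lattice G2"
    and "rho_iso G1 G2 phiC phiD"
  shows "disc_form_iso G1 G2 phiD"
proof -
  have sym1: "\<forall>i j. G1 i j = G1 j i" and sym2: "\<forall>i j. G2 i j = G2 j i"
    using assms(1,2) by (auto simp: is_int_lattice_def)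
  have Rb: "bij_betw phiC (charclasses G1) (charclasses G2)"
    using assms(3) unfolding rho_iso_def by (elim conjE) assumption
  have Rd: "bij_betw phiD (disc G1) (disc G2)"
    using assms(3) unfolding rho_iso_def by (elim conjE) assumption
  have Rh: "\<forall>X\<in>disc G1. \<forall>Y\<in>disc G1. phiD (coset_add X Y) = coset_add (phiD X) (phiD Y)"
    using assms(3) unfolding rho_iso_def by (elim conjE) assumption
  have Rr: "\<forall>C\<in>charclasses G1. rho G2 (phiC C) = rho G1 C"
    using assms(3) unfolding rho_iso_def by (elim conjE) assumption
  have Rc: "\<forall>C\<in>charclasses G1. \<forall>C'\<in>charclasses G1. char_diff (phiC C) (phiC C') = phiD (char_diff C C')"
    using assms(3) unfolding rho_iso_def by (elim conjE) assumption
  have inC: "ccl a \<in> charclasses G1" if "a \<in> chars G1" for a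
    unfolding charclasses_ccl using that by (rule imageI)
  have cd: "char_diff (phiC (ccl a)) (phiC (ccl b)) = phiD (char_diff (ccl a) (ccl b))"
    if "a \<in> chars G1" "b \<in> chars G1" for a b
    using Rc inC[OF that(1)] inC[OF that(2)] by (elim ballE) auto
  have rh: "rho G2 (phiC (ccl a)) = rho G1 (ccl a)" if "a \<in> chars G1" for a
    using Rr inC[OF that] by (elim ballE) auto
  have img: "\<exists>d\<in>chars G2. phiC (ccl a) = ccl d" if "a \<in> chars G1" for a
  proof -
    have "phiC (ccl a) \<in> charclasses G2" by (rule bij_betw_apply[OF Rb inC[OF that]])
    then show ?thesis unfolding charclasses_ccl by (elim imageE) (rule bexI)
  qed
  have form: "disc_form G2 (phiD X) (phiD Y) = disc_form G1 X Y" if X: "X \<in> disc G1" and Y: "Y \<in> disc G1" for X Y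
  proof -
    obtain x where x: "x \<in> dual G1" "X = cs x" using X by (auto simp: disc_cs)
    obtain y where y: "y \<in> dual G1" "Y = cs y" using Y by (auto simp: disc_cs)
    obtain c where c: "c \<in> chars G1" using chars_exist[OF assms(1)] by blast
    define cx where "cx = (\<lambda>i. c i + 2 * x i)"
    define cy where "cy = (\<lambda>i. c i + 2 * y i)"
    define cxy where "cxy = (\<lambda>i. c i + 2 * x i + 2 * y i)"
    have cxc: "cx \<in> chars G1" unfolding cx_def by (rule chars_shift[OF sym1 c x(1)])
    have cyc: "cy \<in> chars G1" unfolding cy_def by (rule chars_shift[OF sym1 c y(1)])
    have cxyc: "cxy \<in> chars G1" unfolding cxy_def using chars_shift[OF sym1 cxc y(1)] by (simp add: cx_def)
    obtain d where d: "d \<in> chars G2" "phiC (ccl c) = ccl d" using img[OF c] by blast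
    obtain dx where dx: "dx \<in> chars G2" "phiC (ccl cx) = ccl dx" using img[OF cxc] by blast
    obtain dy where dy: "dy \<in> chars G2" "phiC (ccl cy) = ccl dy" using img[OF cyc] by blast
    obtain dxy where dxy: "dxy \<in> chars G2" "phiC (ccl cxy) = ccl dxy" using img[OF cxyc] by blast
    define x' where "x' = (\<lambda>i. (dx i - d i) / 2)"
    define y' where "y' = (\<lambda>i. (dy i - d i) / 2)"
    have x'd: "x' \<in> dual G2" unfolding x'_def by (rule half_diff_dual[OF sym2 dx(1) d(1)])
    have y'd: "y' \<in> dual G2" unfolding y'_def by (rule half_diff_dual[OF sym2 dy(1) d(1)])
    have e1: "(\<lambda>i. (cx i - c i) / 2) = x" by (simp add: cx_def)
    have e2: "(\<lambda>i. (cy i - c i) / 2) = y" by (simp add: cy_def)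
    have e3: "(\<lambda>i. (cxy i - cx i) / 2) = y" by (simp add: cxy_def cx_def)
    have PX: "phiD X = cs x'"
      using cd[OF cxc c] unfolding dx(2) d(2) char_diff_ccl e1 x'_def x(2) by simp
    have PY: "phiD Y = cs y'"
      using cd[OF cyc c] unfolding dy(2) d(2) char_diff_ccl e2 y'_def y(2) by simp
    have "cs (\<lambda>i. (dxy i - dx i) / 2) = cs y'"
      using cd[OF cxyc cxc] unfolding dxy(2) dx(2) char_diff_ccl e3 PY[unfolded y(2)] by simp
    then have u: "(\<lambda>i. (dxy i - dx i) / 2 - y' i) \<in> latt" by (rule cs_eqD)
    have dxe: "dx = (\<lambda>i. d i + 2 * x' i)" unfolding x'_def by (rule ext) (simp add: field_simps)
    have dye: "dy = (\<lambda>i. d i + 2 * y' i)" unfolding y'_def by (rule ext) (simp add: field_simps)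
    have "dxy = (\<lambda>i. (d i + 2 * x' i + 2 * y' i) + 2 * ((dxy i - dx i) / 2 - y' i))"
      unfolding x'_def by (rule ext) (simp add: field_simps)
    then have "ccl dxy = ccl (\<lambda>i. (d i + 2 * x' i + 2 * y' i) + 2 * ((dxy i - dx i) / 2 - y' i))"
      by (rule arg_cong)
    also have "\<dots> = ccl (\<lambda>i. d i + 2 * x' i + 2 * y' i)" by (rule ccl_shift[OF u])
    finally have dxye: "ccl dxy = ccl (\<lambda>i. d i + 2 * x' i + 2 * y' i)" .
    have dxyc: "(\<lambda>i. d i + 2 * x' i + 2 * y' i) \<in> chars G2"
      using chars_shift[OF sym2 dx(1) y'd] by (simp add: dxe)
    have r0: "\<exists>k::int. rr G2 d = rr G1 c + 2 * of_int k"
      by (rule set_shift_eq) (use rh[OF c] rho_ccl[OF sym2 d(1)] rho_ccl[OF sym1 c] d(2) in simp)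
    have r1: "\<exists>k::int. rr G2 dx = rr G1 cx + 2 * of_int k"
      by (rule set_shift_eq) (use rh[OF cxc] rho_ccl[OF sym2 dx(1)] rho_ccl[OF sym1 cxc] dx(2) in simp)
    have r2: "\<exists>k::int. rr G2 dy = rr G1 cy + 2 * of_int k"
      by (rule set_shift_eq) (use rh[OF cyc] rho_ccl[OF sym2 dy(1)] rho_ccl[OF sym1 cyc] dy(2) in simp)
    have r3: "\<exists>k::int. rr G2 (\<lambda>i. d i + 2 * x' i + 2 * y' i) = rr G1 cxy + 2 * of_int k"
      by (rule set_shift_eq) (use rh[OF cxyc] rho_ccl[OF sym2 dxyc] rho_ccl[OF sym1 cxyc] dxy(2) dxye in simp)
    obtain k0 k1 k2 k3 where k: "rr G2 d = rr G1 c + 2 * of_int k0" "rr G2 dx = rr G1 cx + 2 * of_int k1"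
      "rr G2 dy = rr G1 cy + 2 * of_int k2"
      "rr G2 (\<lambda>i. d i + 2 * x' i + 2 * y' i) = rr G1 cxy + 2 * of_int k3"
      using r0 r1 r2 r3 by blast
    have q1: "rr G1 cxy - rr G1 cx - rr G1 cy + rr G1 c = 2 * bil G1 x y"
      unfolding cxy_def cx_def cy_def by (rule quad[OF sym1])
    have q2: "rr G2 (\<lambda>i. d i + 2 * x' i + 2 * y' i) - rr G2 dx - rr G2 dy + rr G2 d = 2 * bil G2 x' y'"
      unfolding dxe dye by (rule quad[OF sym2])
    have bb: "bil G2 x' y' = bil G1 x y + of_int (k3 - k1 - k2 + k0)"
      using q1 q2 k by (simp add: field_simps)
    have "disc_form G2 (phiD X) (phiD Y) = {bil G2 x' y' + of_int k | k. True}"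
      unfolding PX PY by (rule disc_form_cs[OF sym2 x'd y'd])
    also have "\<dots> = {bil G1 x y + of_int k | k. True}"
    proof -
      have "{bil G1 x y + of_int (k3 - k1 - k2 + k0) + of_int k | k. True} = {bil G1 x y + of_int k | k::int. True}"
        (is "?A = ?B")
      proof
        show "?A \<subseteq> ?B"
        proof
          fix z assume "z \<in> ?A"
          then obtain k where "z = bil G1 x y + of_int (k3 - k1 - k2 + k0) + of_int k" by blast
          then have "z = bil G1 x y + of_int ((k3 - k1 - k2 + k0) + k)" by simp
          then show "z \<in> ?B" by blast
        qed
        show "?B \<subseteq> ?A"
        proof
          fix z assume "z \<in> ?B"
          then obtain k where "z = bil G1 x y + of_int k" by blast
          then have "z = bil G1 x y + of_int (k3 - k1 - k2 + k0) + of_int (k - (k3 - k1 - k2 + k0))" by simp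
          then show "z \<in> ?A" by blast
        qed
      qed
      then show ?thesis by (simp add: bb)
    qed
    also have "\<dots> = disc_form G1 X Y"
      unfolding x(2) y(2) by (rule disc_form_cs[OF sym1 x(1) y(1), symmetric])
    finally show ?thesis .
  qed
  show ?thesis unfolding disc_form_iso_def using Rd Rh form by (intro conjI ballI) auto
qed

end
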